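(* $\mathrm{1QFA}\nsubseteq\mathrm{1RFA}/n$, and thus $\mathrm{1RFA}/n\neq\mathrm{1QFA}/n$.
   Context: $\mathrm{1QFA}$ is the family of languages recognized with bounded error (error probability at most a constant below $1/2$) by one-way measure-many quantum finite automata (1qfa's). A 1rfa is a one-way deterministic finite automaton satisfying the reversibility condition (each state has at most one predecessor per tape symbol). For equal-length strings $x,y$, $\genfrac{[}{]}{0pt}{}{x}{y}$ is the two-track string with $x$ on the upper track and $y$ on the lower track. $\mathrm{1RFA}/n$ (resp. $\mathrm{1QFA}/n$) is the family of languages $L$ for which there exist a 1rfa (resp. bounded-error 1qfa) $M$, an advice alphabet $\Gamma$ and an advice function $h$ with $|h(n)|=n$ such that $M$ on $\genfrac{[}{]}{0pt}{}{x}{h(|x|)}$ outputs $L(x)$ (with probability at least $1-\varepsilon$, $\varepsilon\in[0,1/2)$, in the 1qfa case). (The witness language is $\{0^m1^n\mid m,n\in\mathbb{N}\}$.) *)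

theory Defs
  imports Complex_Main
begin

datatype 'c tsym = Cent | Sym 'c | Dollar

definition tape :: "'c list \<Rightarrow> 'c tsym list" where
  "tape w = Cent # map Sym w @ [Dollar]"

text \<open>Two-track string: upper track x, lower track the advice string y (same length).\<close>
definition track2 :: "'a list \<Rightarrow> 'g list \<Rightarrow> ('a \<times> 'g) list" where
  "track2 x y = zip x y"

record 'c rfa =
  rQ :: "nat set"
  rdelta :: "nat \<Rightarrow> 'c tsym \<Rightarrow> nat"
  rq0 :: nat
  rQacc :: "nat set"
  rQrej :: "nat set"

definition rfa_wf :: "'c rfa \<Rightarrow> bool" where
  "rfa_wf M \<longleftrightarrow> finite (rQ M) \<and> rq0 M \<in> rQ M \<and>
     rQacc M \<subseteq> rQ M \<and> rQrej M \<subseteq> rQ M \<and> rQacc M \<inter> rQrej M = {} \<and>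
     (\<forall>q \<in> rQ M. \<forall>s. rdelta M q s \<in> rQ M) \<and>
     \<comment> \<open>reversibility: each state has at most one predecessor per tape symbol\<close>
     (\<forall>s. inj_on (\<lambda>q. rdelta M q s) (rQ M))"

fun rfa_out :: "'c rfa \<Rightarrow> nat \<Rightarrow> 'c tsym list \<Rightarrow> bool option" where
  "rfa_out M q [] = (if q \<in> rQacc M then Some True else if q \<in> rQrej M then Some False else None)"
| "rfa_out M q (s # w) = (if q \<in> rQacc M then Some True else if q \<in> rQrej M then Some False
                          else rfa_out M (rdelta M q s) w)"

definition rfa_output :: "'c rfa \<Rightarrow> 'c list \<Rightarrow> bool option" where
  "rfa_output M w = rfa_out M (rq0 M) (tape w)"

text \<open>States are 0..<k; U s is the k x k transition matrix for tape symbol s.\<close>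
record 'c qfa =
  qdim :: nat
  qU :: "'c tsym \<Rightarrow> nat \<Rightarrow> nat \<Rightarrow> complex"
  qq0 :: nat
  qQacc :: "nat set"
  qQrej :: "nat set"

definition qfa_wf :: "'c qfa \<Rightarrow> bool" where
  "qfa_wf M \<longleftrightarrow> qq0 M < qdim M \<and> qQacc M \<subseteq> {..<qdim M} \<and> qQrej M \<subseteq> {..<qdim M} \<and>
     qQacc M \<inter> qQrej M = {} \<and>
     \<comment> \<open>each U s is unitary\<close>
     (\<forall>s. \<forall>i<qdim M. \<forall>j<qdim M.
        (\<Sum>l<qdim M. cnj (qU M s l i) * qU M s l j) = (if i = j then 1 else 0))"

definition qfa_apply :: "'c qfa \<Rightarrow> 'c tsym \<Rightarrow> (nat \<Rightarrow> complex) \<Rightarrow> (nat \<Rightarrow> complex)" where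
  "qfa_apply M s \<psi> = (\<lambda>i. if i < qdim M then (\<Sum>j<qdim M. qU M s i j * \<psi> j) else 0)"

definition qfa_proj_non :: "'c qfa \<Rightarrow> (nat \<Rightarrow> complex) \<Rightarrow> (nat \<Rightarrow> complex)" where
  "qfa_proj_non M \<psi> = (\<lambda>i. if i < qdim M \<and> i \<notin> qQacc M \<and> i \<notin> qQrej M then \<psi> i else 0)"

text \<open>Total probability of acceptance (resp. rejection) in the measure-many model:
  after each step a measurement w.r.t. accepting/rejecting/non-halting subspaces.\<close>
fun qfa_pacc :: "'c qfa \<Rightarrow> (nat \<Rightarrow> complex) \<Rightarrow> 'c tsym list \<Rightarrow> real" where
  "qfa_pacc M \<psi> [] = 0"
| "qfa_pacc M \<psi> (s # w) =
     (let \<phi> = qfa_apply M s \<psi> in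
       (\<Sum>q\<in>qQacc M. (cmod (\<phi> q))\<^sup>2) + qfa_pacc M (qfa_proj_non M \<phi>) w)"

fun qfa_prej :: "'c qfa \<Rightarrow> (nat \<Rightarrow> complex) \<Rightarrow> 'c tsym list \<Rightarrow> real" where
  "qfa_prej M \<psi> [] = 0"
| "qfa_prej M \<psi> (s # w) =
     (let \<phi> = qfa_apply M s \<psi> in
       (\<Sum>q\<in>qQrej M. (cmod (\<phi> q))\<^sup>2) + qfa_prej M (qfa_proj_non M \<phi>) w)"

definition qfa_init :: "'c qfa \<Rightarrow> nat \<Rightarrow> complex" where
  "qfa_init M = (\<lambda>i. if i = qq0 M then 1 else 0)"

definition qfa_accprob :: "'c qfa \<Rightarrow> 'c list \<Rightarrow> real" where
  "qfa_accprob M w = qfa_pacc M (qfa_init M) (tape w)"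

definition qfa_rejprob :: "'c qfa \<Rightarrow> 'c list \<Rightarrow> real" where
  "qfa_rejprob M w = qfa_prej M (qfa_init M) (tape w)"

definition qfa_outputs :: "'c qfa \<Rightarrow> 'c list \<Rightarrow> bool \<Rightarrow> real \<Rightarrow> bool" where
  "qfa_outputs M w b p \<longleftrightarrow> (if b then qfa_accprob M w \<ge> p else qfa_rejprob M w \<ge> p)"

definition in_1QFA :: "'a list set \<Rightarrow> bool" where
  "in_1QFA L \<longleftrightarrow> (\<exists>(M :: 'a qfa) \<epsilon>. qfa_wf M \<and> 0 \<le> \<epsilon> \<and> \<epsilon> < 1/2 \<and>
      (\<forall>x. qfa_outputs M x (x \<in> L) (1 - \<epsilon>)))"

definition advice :: "nat set \<Rightarrow> (nat \<Rightarrow> nat list) \<Rightarrow> bool" where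
  "advice \<Gamma> h \<longleftrightarrow> finite \<Gamma> \<and> (\<forall>n. length (h n) = n \<and> set (h n) \<subseteq> \<Gamma>)"

definition in_1RFA_n :: "'a list set \<Rightarrow> bool" where
  "in_1RFA_n L \<longleftrightarrow> (\<exists>(M :: ('a \<times> nat) rfa) \<Gamma> h. rfa_wf M \<and> advice \<Gamma> h \<and>
      (\<forall>x. rfa_output M (track2 x (h (length x))) = Some (x \<in> L)))"

definition in_1QFA_n :: "'a list set \<Rightarrow> bool" where
  "in_1QFA_n L \<longleftrightarrow> (\<exists>(M :: ('a \<times> nat) qfa) \<Gamma> h \<epsilon>. qfa_wf M \<and> advice \<Gamma> h \<and>
      0 \<le> \<epsilon> \<and> \<epsilon> < 1/2 \<and>
      (\<forall>x. qfa_outputs M (track2 x (h (length x))) (x \<in> L) (1 - \<epsilon>)))"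

end

theory Submission
  imports Defs
begin


definition mat :: "bool tsym \<Rightarrow> real list list" where
 "mat s = (case s of
    Cent \<Rightarrow> [[3/5,-4/5,0,0,0],[4/5,3/5,0,0,0],[0,0,1,0,0],[0,0,0,1,0],[0,0,0,0,1]]
  | Sym False \<Rightarrow> [[9/25,12/25,-4/5,0,0],[12/25,16/25,3/5,0,0],[4/5,-3/5,0,0,0],[0,0,0,1,0],[0,0,0,0,1]]
  | Sym True \<Rightarrow> [[0,0,1,0,0],[0,1,0,0,0],[1,0,0,0,0],[0,0,0,1,0],[0,0,0,0,1]]
  | Dollar \<Rightarrow> [[0,0,0,1,0],[0,0,0,0,1],[0,0,1,0,0],[1,0,0,0,0],[0,1,0,0,0]])"

definition UU :: "bool tsym \<Rightarrow> nat \<Rightarrow> nat \<Rightarrow> complex" where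
 "UU s i j = (if i < 5 \<and> j < 5 then complex_of_real (mat s ! i ! j) else 0)"

definition M0 :: "bool qfa" where
 "M0 = \<lparr>qdim = 5, qU = UU, qq0 = 0, qQacc = {3,4}, qQrej = {2}\<rparr>"

lemma lt5: "(i::nat) < 5 \<longleftrightarrow> i = 0 \<or> i = 1 \<or> i = 2 \<or> i = 3 \<or> i = 4" by auto

lemma sum5: "(\<Sum>l<5::nat. f l) = f 0 + f 1 + f 2 + f 3 + (f 4 :: 'a::comm_monoid_add)"
  by (simp add: eval_nat_numeral lessThan_Suc add.commute add.left_commute)

lemma wf: "qfa_wf M0"
  unfolding qfa_wf_def M0_def
  apply (simp add: sum5 UU_def)
  apply (intro allI)
  subgoal for s by (cases s; auto simp: lt5 mat_def split: bool.splits)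
  done

lemma M0_simps[simp]: "qQacc M0 = {3,4}" "qQrej M0 = {2}" "qdim M0 = 5" "qU M0 = UU" "qq0 M0 = 0"
  by (simp_all add: M0_def)

definition vec :: "complex \<Rightarrow> complex \<Rightarrow> nat \<Rightarrow> complex" where
  "vec x y = (\<lambda>i. if i = 0 then x else if i = 1 then y else 0)"

lemma apply_vec: "qfa_apply M0 s (vec x y) = (\<lambda>i. if i < 5 then UU s i 0 * x + UU s i (Suc 0) * y else 0)"
  unfolding qfa_apply_def M0_def by (auto simp: sum5 vec_def)

lemma proj_vec: "qfa_proj_non M0 (qfa_apply M0 s (vec x y)) = vec (UU s 0 0 * x + UU s 0 (Suc 0) * y) (UU s (Suc 0) 0 * x + UU s (Suc 0) (Suc 0) * y)"
  unfolding qfa_proj_non_def apply_vec by (auto simp: M0_def vec_def)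

lemma pacc_step: "qfa_pacc M0 (vec x y) (s # w) = (cmod (UU s 3 0 * x + UU s 3 (Suc 0) * y))\<^sup>2 + (cmod (UU s 4 0 * x + UU s 4 (Suc 0) * y))\<^sup>2
   + qfa_pacc M0 (vec (UU s 0 0 * x + UU s 0 (Suc 0) * y) (UU s (Suc 0) 0 * x + UU s (Suc 0) (Suc 0) * y)) w"
  using proj_vec[of s x y] by (simp add: Let_def apply_vec)

lemma prej_step: "qfa_prej M0 (vec x y) (s # w) = (cmod (UU s 2 0 * x + UU s 2 (Suc 0) * y))\<^sup>2
   + qfa_prej M0 (vec (UU s 0 0 * x + UU s 0 (Suc 0) * y) (UU s (Suc 0) 0 * x + UU s (Suc 0) (Suc 0) * y)) w"
  using proj_vec[of s x y] by (simp add: Let_def apply_vec)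

declare qfa_pacc.simps(2)[simp del] qfa_prej.simps(2)[simp del]

lemma UU_F: "UU (Sym False) 0 0 = 9/25" "UU (Sym False) 0 (Suc 0) = 12/25" "UU (Sym False) (Suc 0) 0 = 12/25"
  "UU (Sym False) (Suc 0) (Suc 0) = 16/25" "UU (Sym False) 2 0 = 4/5" "UU (Sym False) 2 (Suc 0) = -3/5"
  "UU (Sym False) 3 0 = 0" "UU (Sym False) 3 (Suc 0) = 0" "UU (Sym False) 4 0 = 0" "UU (Sym False) 4 (Suc 0) = 0"
  by (simp_all add: UU_def mat_def)
lemma UU_T: "UU (Sym True) 0 0 = 0" "UU (Sym True) 0 (Suc 0) = 0" "UU (Sym True) (Suc 0) 0 = 0"
  "UU (Sym True) (Suc 0) (Suc 0) = 1" "UU (Sym True) 2 0 = 1" "UU (Sym True) 2 (Suc 0) = 0"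
  "UU (Sym True) 3 0 = 0" "UU (Sym True) 3 (Suc 0) = 0" "UU (Sym True) 4 0 = 0" "UU (Sym True) 4 (Suc 0) = 0"
  by (simp_all add: UU_def mat_def)
lemma UU_D: "UU Dollar 0 0 = 0" "UU Dollar 0 (Suc 0) = 0" "UU Dollar (Suc 0) 0 = 0"
  "UU Dollar (Suc 0) (Suc 0) = 0" "UU Dollar 2 0 = 0" "UU Dollar 2 (Suc 0) = 0"
  "UU Dollar 3 0 = 1" "UU Dollar 3 (Suc 0) = 0" "UU Dollar 4 0 = 0" "UU Dollar 4 (Suc 0) = 1"
  by (simp_all add: UU_def mat_def)
lemma UU_C: "UU Cent 0 0 = 3/5" "UU Cent (Suc 0) 0 = 4/5" "UU Cent 2 0 = 0" "UU Cent 3 0 = 0" "UU Cent 4 0 = 0"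
  by (simp_all add: UU_def mat_def)

lemma init_vec: "qfa_init M0 = vec 1 0"
  by (auto simp: qfa_init_def vec_def M0_def)

lemma prej_nonneg: "qfa_prej M0 \<psi> w \<ge> 0"
proof (induction w arbitrary: \<psi>)
  case Nil then show ?case by simp
next
  case (Cons s w) then show ?case by (simp add: qfa_prej.simps Let_def sum_nonneg)
qed

lemma fixF: "UU (Sym False) 0 0 * (3/5*k) + UU (Sym False) 0 (Suc 0) * (4/5*k) = 3/5*k"
  "UU (Sym False) (Suc 0) 0 * (3/5*k) + UU (Sym False) (Suc 0) (Suc 0) * (4/5*k) = 4/5*k"
  "UU (Sym False) 2 0 * (3/5*k) + UU (Sym False) 2 (Suc 0) * (4/5*k) = 0"
  "UU (Sym False) 3 0 * (3/5*k) + UU (Sym False) 3 (Suc 0) * (4/5*k) = 0"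
  "UU (Sym False) 4 0 * (3/5*k) + UU (Sym False) 4 (Suc 0) * (4/5*k) = 0"
  by (simp_all add: UU_F algebra_simps)

lemma F_fix_acc: "qfa_pacc M0 (vec (3/5*k) (4/5*k)) (map Sym (replicate m False) @ r) = qfa_pacc M0 (vec (3/5*k) (4/5*k)) r"
proof (induction m)
  case 0 then show ?case by simp
next
  case (Suc m)
  have "qfa_pacc M0 (vec (3/5*k) (4/5*k)) (Sym False # (map Sym (replicate m False) @ r)) = qfa_pacc M0 (vec (3/5*k) (4/5*k)) (map Sym (replicate m False) @ r)"
    by (simp only: pacc_step fixF) simp
  then show ?case using Suc by simp
qed

lemma F_fix_rej: "qfa_prej M0 (vec (3/5*k) (4/5*k)) (map Sym (replicate m False) @ r) = qfa_prej M0 (vec (3/5*k) (4/5*k)) r"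
proof (induction m)
  case 0 then show ?case by simp
next
  case (Suc m)
  have "qfa_prej M0 (vec (3/5*k) (4/5*k)) (Sym False # (map Sym (replicate m False) @ r)) = qfa_prej M0 (vec (3/5*k) (4/5*k)) (map Sym (replicate m False) @ r)"
    by (simp only: prej_step fixF) simp
  then show ?case using Suc by simp
qed

lemma T_fix_acc: "qfa_pacc M0 (vec 0 y) (map Sym (replicate m True) @ r) = qfa_pacc M0 (vec 0 y) r"
  by (induction m) (simp_all add: pacc_step UU_T)

lemma T_fix_rej: "qfa_prej M0 (vec 0 y) (map Sym (replicate m True) @ r) = qfa_prej M0 (vec 0 y) r"
  by (induction m) (simp_all add: prej_step UU_T)

lemma start_acc: "qfa_accprob M0 w = qfa_pacc M0 (vec (3/5*1) (4/5*1)) (map Sym w @ [Dollar])"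
  by (simp add: qfa_accprob_def tape_def init_vec pacc_step UU_C)
lemma start_rej: "qfa_rejprob M0 w = qfa_prej M0 (vec (3/5*1) (4/5*1)) (map Sym w @ [Dollar])"
  by (simp add: qfa_rejprob_def tape_def init_vec prej_step UU_C)

lemma member_acc: "qfa_accprob M0 (replicate m False @ replicate k True) \<ge> 369/625"
proof (cases k)
  case 0
  then show ?thesis unfolding start_acc using F_fix_acc[of 1 m "[Dollar]"]
    by (simp add: pacc_step UU_D power2_eq_square)
next
  case (Suc k')
  have "qfa_accprob M0 (replicate m False @ replicate k True) = qfa_pacc M0 (vec (3/5*1) (4/5*1)) (Sym True # map Sym (replicate k' True) @ [Dollar])"
    unfolding start_acc using F_fix_acc[of 1 m] Suc by simp
  also have "\<dots> = 16/25"
    using T_fix_acc[of "4/5" k' "[Dollar]"] by (simp add: pacc_step UU_T UU_D power2_eq_square)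
  finally show ?thesis by simp
qed

lemma nonmember_rej: "qfa_rejprob M0 (replicate m False @ replicate (Suc k) True @ False # r) \<ge> 369/625"
proof -
  have "qfa_rejprob M0 (replicate m False @ replicate (Suc k) True @ False # r)
     = qfa_prej M0 (vec (3/5*1) (4/5*1)) (Sym True # map Sym (replicate k True) @ Sym False # map Sym r @ [Dollar])"
    unfolding start_rej using F_fix_rej[of 1 m] by simp
  also have "\<dots> = 9/25 + qfa_prej M0 (vec 0 (4/5)) (map Sym (replicate k True) @ Sym False # map Sym r @ [Dollar])"
    by (simp add: prej_step UU_T power2_eq_square)
  also have "\<dots> = 9/25 + qfa_prej M0 (vec 0 (4/5)) (Sym False # map Sym r @ [Dollar])"
    by (simp only: T_fix_rej)
  also have "\<dots> = 9/25 + 144/625 + qfa_prej M0 (vec (12/25*(4/5)) (16/25*(4/5))) (map Sym r @ [Dollar])"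
    by (simp add: prej_step UU_F power2_eq_square norm_mult)
  finally show ?thesis using prej_nonneg[of "vec (12/25*(4/5)) (16/25*(4/5))" "map Sym r @ [Dollar]"] by linarith
qed



lemma sorted_char: "sorted (x::bool list) \<Longrightarrow> \<exists>m k. x = replicate m False @ replicate k True"
proof (induction x)
  case Nil then show ?case by (metis append_Nil replicate_0)
next
  case (Cons b x)
  show ?case
  proof (cases b)
    case True
    with Cons.prems have "\<forall>y\<in>set x. y" by auto
    then have "x = replicate (length x) True" by (simp add: replicate_length_same)
    then have "b # x = replicate 0 False @ replicate (Suc (length x)) True" using True by simp
    then show ?thesis by blast
  next
    case False
    with Cons obtain m k where "x = replicate m False @ replicate k True" by auto
    then show ?thesis using False by (intro exI[of _ "Suc m"] exI[of _ k]) simp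
  qed
qed

lemma le_bool_imp: "((\<le>)::bool \<Rightarrow> bool \<Rightarrow> bool) = (\<longrightarrow>)"
  by (auto simp: fun_eq_iff)

lemma unsorted_char: "\<not> sorted (x::bool list) \<Longrightarrow> \<exists>m k r. x = replicate m False @ replicate (Suc k) True @ False # r"
proof (induction x)
  case Nil then show ?case by simp
next
  case (Cons b x)
  show ?case
  proof (cases b)
    case False
    with Cons.prems have "\<not> sorted x" by (simp add: le_bool_imp)
    then obtain m k r where "x = replicate m False @ replicate (Suc k) True @ False # r" using Cons.IH by blast
    then show ?thesis using False by (intro exI[of _ "Suc m"] exI[of _ k] exI[of _ r]) simp
  next
    case True
    show ?thesis
    proof (cases "sorted x")
      case False
      then obtain m k r where x: "x = replicate m False @ replicate (Suc k) True @ False # r" using Cons.IH by blast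
      show ?thesis
      proof (cases m)
        case 0 then show ?thesis using x True by (intro exI[of _ 0] exI[of _ "Suc k"] exI[of _ r]) simp
      next
        case (Suc m') then show ?thesis using x True
          by (intro exI[of _ 0] exI[of _ 0] exI[of _ "replicate m' False @ replicate (Suc k) True @ False # r"]) simp
      qed
    next
      case st: True
      then obtain m k where x: "x = replicate m False @ replicate k True" using sorted_char by blast
      have "m \<noteq> 0"
      proof
        assume "m = 0"
        then have "b # x = replicate (Suc k) True" using x True by simp
        then have "sorted (b # x)" by (metis sorted_replicate)
        then show False using Cons.prems by blast
      qed
      then obtain m' where "m = Suc m'" by (cases m) auto
      then show ?thesis using x True
        by (intro exI[of _ 0] exI[of _ 0] exI[of _ "replicate m' False @ replicate k True"]) simp
    qed
  qed
qed

lemma qfa_good: "qfa_outputs M0 x (x \<in> {x. sorted x}) (1 - 256/625)"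
proof (cases "sorted x")
  case True
  then obtain m k where "x = replicate m False @ replicate k True" using sorted_char by blast
  then show ?thesis using True member_acc[of m k] by (simp add: qfa_outputs_def)
next
  case False
  then obtain m k r where "x = replicate m False @ replicate (Suc k) True @ False # r" using unsorted_char by blast
  then show ?thesis using False nonmember_rej[of m k r] by (simp add: qfa_outputs_def)
qed

lemma in1QFA: "in_1QFA {x::bool list. sorted x}"
  unfolding in_1QFA_def using wf qfa_good by (intro exI[of _ M0] exI[of _ "256/625"]) auto

definition M1 :: "(bool \<times> nat) qfa" where
 "M1 = \<lparr>qdim = 5, qU = \<lambda>s. UU (map_tsym fst s), qq0 = 0, qQacc = {3,4}, qQrej = {2}\<rparr>"

lemma M1_simps[simp]: "qQacc M1 = {3,4}" "qQrej M1 = {2}" "qdim M1 = 5" "qq0 M1 = 0"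
  by (simp_all add: M1_def)

lemma M1_apply: "qfa_apply M1 s = qfa_apply M0 (map_tsym fst s)"
  by (auto simp: qfa_apply_def M1_def fun_eq_iff)
lemma M1_proj: "qfa_proj_non M1 = qfa_proj_non M0"
  by (auto simp: qfa_proj_non_def M1_def fun_eq_iff)

lemma M1_pacc: "qfa_pacc M1 \<psi> w = qfa_pacc M0 \<psi> (map (map_tsym fst) w)"
  by (induction w arbitrary: \<psi>) (simp_all add: qfa_pacc.simps M1_apply M1_proj Let_def)
lemma M1_prej: "qfa_prej M1 \<psi> w = qfa_prej M0 \<psi> (map (map_tsym fst) w)"
  by (induction w arbitrary: \<psi>) (simp_all add: qfa_prej.simps M1_apply M1_proj Let_def)

lemma M1_tape: "length a = length x \<Longrightarrow> map (map_tsym fst) (tape (track2 x a)) = tape x"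
proof -
  assume "length a = length x"
  then have "map fst (zip x a) = x" by (simp add: map_fst_zip)
  then have "map (\<lambda>p. Sym (fst p)) (zip x a) = map Sym x"
  proof -
    have "map (\<lambda>p. Sym (fst p)) (zip x a) = map Sym (map fst (zip x a))" by simp
    then show ?thesis using \<open>map fst (zip x a) = x\<close> by simp
  qed
  then show ?thesis by (simp add: tape_def track2_def comp_def)
qed

lemma M1_init: "qfa_init M1 = qfa_init M0"
  by (simp add: qfa_init_def M1_def)

lemma M1_qU: "qU M1 = (\<lambda>s. UU (map_tsym fst s))" by (simp add: M1_def)

lemma M1_wf: "qfa_wf M1"
proof -
  have H: "\<forall>s. \<forall>i<5. \<forall>j<5. (\<Sum>l<5. cnj (UU s l i) * UU s l j) = (if i = j then 1 else 0)"
    using wf unfolding qfa_wf_def M0_simps by blast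
  have A: "\<forall>s. \<forall>i<5. \<forall>j<5. (\<Sum>l<5. cnj (UU (map_tsym fst s) l i) * UU (map_tsym fst s) l j) = (if i = j then 1 else 0)"
    using H by blast
  show ?thesis unfolding qfa_wf_def M1_simps M1_qU
    apply (intro conjI)
    apply simp
    apply simp
    apply simp
    apply simp
    apply (rule A)
    done
qed

lemma M1_acc: "qfa_accprob M1 (track2 x (replicate (length x) 0)) = qfa_accprob M0 x"
  unfolding qfa_accprob_def M1_pacc M1_init by (subst M1_tape) simp_all
lemma M1_rej: "qfa_rejprob M1 (track2 x (replicate (length x) 0)) = qfa_rejprob M0 x"
  unfolding qfa_rejprob_def M1_prej M1_init by (subst M1_tape) simp_all

lemma M1_good: "qfa_outputs M1 (track2 x (replicate (length x) 0)) (x \<in> {x. sorted x}) (1 - 256 / 625)"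
  using qfa_good[of x] unfolding qfa_outputs_def M1_acc M1_rej .

lemma in1QFAn: "in_1QFA_n {x::bool list. sorted x}"
  unfolding in_1QFA_n_def
  apply (rule exI[of _ M1], rule exI[of _ "{0::nat}"], rule exI[of _ "\<lambda>n. replicate n 0"], rule exI[of _ "256/625"])
  using M1_wf M1_good by (auto simp: advice_def)



fun run :: "'c rfa \<Rightarrow> nat \<Rightarrow> 'c tsym list \<Rightarrow> nat" where
  "run M q [] = q"
| "run M q (s # w) = run M (rdelta M q s) w"

lemma run_append: "run M q (u @ v) = run M (run M q u) v"
  by (induction u arbitrary: q) simp_all

lemma dich: "(\<exists>b. \<forall>v. rfa_out M q (u @ v) = Some b) \<or> (\<forall>v. rfa_out M q (u @ v) = rfa_out M (run M q u) v)"
proof (induction u arbitrary: q)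
  case Nil then show ?case by simp
next
  case (Cons s u)
  show ?case
  proof (cases "q \<in> rQacc M")
    case True then show ?thesis by (intro disjI1 exI[of _ True]) simp
  next
    case F1: False
    show ?thesis
    proof (cases "q \<in> rQrej M")
      case True then show ?thesis using F1 by (intro disjI1 exI[of _ False]) simp
    next
      case False
      from Cons.IH[of "rdelta M q s"] show ?thesis using F1 False by simp
    qed
  qed
qed

lemma run_in: "rfa_wf M \<Longrightarrow> q \<in> rQ M \<Longrightarrow> run M q w \<in> rQ M"
  by (induction w arbitrary: q) (auto simp: rfa_wf_def)

lemma run_inj: "rfa_wf M \<Longrightarrow> q \<in> rQ M \<Longrightarrow> q' \<in> rQ M \<Longrightarrow> run M q w = run M q' w \<Longrightarrow> q = q'"
proof (induction w arbitrary: q q')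
  case Nil then show ?case by simp
next
  case (Cons s w)
  have "rdelta M q s \<in> rQ M" "rdelta M q' s \<in> rQ M" using Cons.prems by (auto simp: rfa_wf_def)
  with Cons have "rdelta M q s = rdelta M q' s" by simp
  moreover have "inj_on (\<lambda>q. rdelta M q s) (rQ M)" using Cons.prems by (simp add: rfa_wf_def)
  ultimately show ?case using Cons.prems by (auto dest: inj_onD)
qed

lemma notRFA: "\<not> in_1RFA_n {x::bool list. sorted x}"
proof
  assume "in_1RFA_n {x::bool list. sorted x}"
  then obtain M :: "(bool \<times> nat) rfa" and \<Gamma> h where wf: "rfa_wf M" and adv: "advice \<Gamma> h"
    and out: "\<And>x. rfa_output M (track2 x (h (length x))) = Some (x \<in> {x. sorted x})"
    unfolding in_1RFA_n_def by blast
  define Q where "Q = card (rQ M)"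
  define n where "n = Q + 2"
  define a where "a = h n"
  define pre where "pre u = Cent # map Sym (zip u (take (length u) a))" for u :: "bool list"
  define suf where "suf j v = map Sym (zip v (drop j a)) @ [Dollar]" for j and v :: "bool list"
  define f where "f u = run M (rq0 M) (pre u)" for u
  have tsplit: "tape (track2 (u @ v) a) = pre u @ suf (length u) v" for u v
    by (simp add: tape_def track2_def pre_def suf_def zip_append1)
  have outp: "rfa_out M (rq0 M) (pre u @ suf (length u) v) = Some (sorted (u @ v))"
    if "length u + length v = n" for u v
    using out[of "u @ v"] that unfolding rfa_output_def a_def tsplit[symmetric] by simp
  have key: "rfa_out M (f u) (suf (length u) v) = Some (sorted (u @ v))"
    if "length u + length v1 = n" "length u + length v2 = n" "sorted (u @ v1)" "\<not> sorted (u @ v2)"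
       "length u + length v = n" for u v v1 v2
  proof -
    from dich[of M "rq0 M" "pre u"] show ?thesis
    proof
      assume "\<exists>b. \<forall>v. rfa_out M (rq0 M) (pre u @ v) = Some b"
      then obtain b where b: "\<And>v. rfa_out M (rq0 M) (pre u @ v) = Some b" by blast
      have "b = True" using b[of "suf (length u) v1"] outp[of u v1] that by simp
      moreover have "b = False" using b[of "suf (length u) v2"] outp[of u v2] that by simp
      ultimately show ?thesis by simp
    next
      assume "\<forall>v. rfa_out M (rq0 M) (pre u @ v) = rfa_out M (run M (rq0 M) (pre u)) v"
      then show ?thesis using outp[of u v] that by (simp add: f_def)
    qed
  qed
  define S where "S i = f (replicate i False @ replicate (Q - i) True)" for i
  have Sin: "S i \<in> rQ M" for i
    unfolding S_def f_def by (rule run_in[OF wf]) (simp add: wf[unfolded rfa_wf_def])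
  have pre_app: "pre (u @ w) = pre u @ map Sym (zip w (drop (length u) (take (length u + length w) a)))" for u w
    by (simp add: pre_def zip_append1)
  have neq: "S i \<noteq> S j" if ij: "i < j" "j \<le> Q" for i j
  proof
    assume eq: "S i = S j"
    define u1 where "u1 = replicate i False @ replicate (j - i) True"
    define u2 where "u2 = replicate j False"
    define W where "W = replicate (Q - j) True"
    have l1: "length u1 = j" "length u2 = j" using ij by (simp_all add: u1_def u2_def)
    have "replicate i False @ replicate (Q - i) True = u1 @ W"
      using ij by (simp add: u1_def W_def replicate_add[symmetric])
    then have "S i = f (u1 @ W)" unfolding S_def by simp
    then have Si: "S i = run M (f u1) (map Sym (zip W (drop j (take (j + length W) a))))"
      by (simp only: f_def pre_app run_append l1)
    have "replicate j False @ replicate (Q - j) True = u2 @ W" by (simp add: u2_def W_def)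
    then have "S j = f (u2 @ W)" unfolding S_def by simp
    then have Sj: "S j = run M (f u2) (map Sym (zip W (drop j (take (j + length W) a))))"
      by (simp only: f_def pre_app run_append l1)
    have fin: "f u1 \<in> rQ M" "f u2 \<in> rQ M"
      unfolding f_def by (rule run_in[OF wf], simp add: wf[unfolded rfa_wf_def])+
    have feq: "f u1 = f u2" using run_inj[OF wf fin] eq Si Sj by simp
    define v where "v = False # replicate (n - j - 1) True"
    have r1: "rfa_out M (f u1) (suf j v) = Some False"
      using key[of u1 "replicate (n - j) True" v v] ij l1
      by (simp add: v_def n_def u1_def sorted_append) blast
    have r2: "rfa_out M (f u2) (suf j v) = Some True"
      using key[of u2 "replicate (n - j) True" "True # False # replicate (n - j - 2) True" v] ij l1
      by (simp add: v_def n_def u2_def sorted_append)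
    show False using r1 r2 feq by simp
  qed
  have "inj_on S {0..Q}"
    by (rule inj_onI) (metis atLeastAtMost_iff linorder_neqE_nat neq)
  then have "card (S ` {0..Q}) = Q + 1" by (simp add: card_image)
  moreover have "S ` {0..Q} \<subseteq> rQ M" using Sin by auto
  moreover have "finite (rQ M)" using wf by (simp add: rfa_wf_def)
  ultimately have "Q + 1 \<le> Q" unfolding Q_def by (metis card_mono)
  then show False by simp
qed

theorem corollary4p2:
  shows "(\<exists>L :: bool list set. in_1QFA L \<and> \<not> in_1RFA_n L) \<and>
         {L :: bool list set. in_1RFA_n L} \<noteq> {L. in_1QFA_n L}"
proof
  show "\<exists>L :: bool list set. in_1QFA L \<and> \<not> in_1RFA_n L"
    using in1QFA notRFA by blast
  show "{L :: bool list set. in_1RFA_n L} \<noteq> {L. in_1QFA_n L}"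
    using in1QFAn notRFA by blast
qed

end
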